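(* Let $\widetilde\nabla$ be the canonical snm-connection on $\mathbb R^3$ determined by $\mathsf C=\partial_z$, and let $M$ be the rotational surface $\psi(s,t)=(x(s)\cos t,x(s)\sin t,z(s))$, $s\in I$, $t\in\mathbb R$, with $I$ an open interval, $x>0$, $x'^2+z'^2=1$. If the generating curve $s\mapsto(x(s),z(s))$ is an arc of a circle, i.e. $(x(s),z(s))=(c_1,c_2)+r(\cos(s/r),\sin(s/r))$ for constants $c_1,c_2\in\mathbb R$, $r>0$, then the sectional curvature $K$ of $M$ with respect to $\widetilde\nabla$ is not constant.
   Context: Let $\langle\cdot,\cdot\rangle$ be the Euclidean metric on $\mathbb R^3$ and $\widetilde\nabla^0$ its Levi-Civita connection (the ordinary directional derivative). Given a smooth vector field $\mathsf C$ on $\mathbb R^3$, the semi-symmetric non-metric connection (snm-connection) determined by $\mathsf C$ is $\widetilde\nabla_XY=\widetilde\nabla^0_XY+\langle \mathsf C,Y\rangle X$. Its curvature tensor is $\widetilde R(X,Y)Z=\widetilde\nabla_X\widetilde\nabla_YZ-\widetilde\nabla_Y\widetilde\nabla_XZ-\widetilde\nabla_{[X,Y]}Z$. For a surface $M$ immersed in $\mathbb R^3$, the induced connection is $\nabla_XY=(\widetilde\nabla_XY)^{\top}$ (tangential component), with curvature tensor $R$ defined by the same formula, and the sectional curvature of $M$ with respect to $\widetilde\nabla$ at $p$ is $K(p)=\frac12\big(\langle R(e_1,e_2)e_2,e_1\rangle+\langle R(e_2,e_1)e_1,e_2\rangle\big)$ for an orthonormal basis $\{e_1,e_2\}$ of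 $T_pM$. *)

theory Defs
  imports "HOL-Analysis.Analysis"
begin

text \<open>A parametrized surface psi : (s,t) |-> psi s t in R^3. Vector fields along the
surface (tangent or ambient-valued) are functions of the parameters (s,t).\<close>

type_synonym field3 = "real \<Rightarrow> real \<Rightarrow> real^3"

definition d_s :: "field3 \<Rightarrow> field3" where
  "d_s Y s t = vector_derivative (\<lambda>u. Y u t) (at s)"

definition d_t :: "field3 \<Rightarrow> field3" where
  "d_t Y s t = vector_derivative (\<lambda>u. Y s u) (at t)"

text \<open>Coefficients (a,b) of the tangential part a psi_s + b psi_t of a vector V at (s,t),
 obtained from the first fundamental form (Gram system).\<close>
definition tcoef :: "field3 \<Rightarrow> real^3 \<Rightarrow> real \<Rightarrow> real \<Rightarrow> real \<times> real" where
  "tcoef psi V s t =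
     (let Ps = d_s psi s t; Pt = d_t psi s t;
          E = Ps \<bullet> Ps; F = Ps \<bullet> Pt; G = Pt \<bullet> Pt;
          p = V \<bullet> Ps; q = V \<bullet> Pt; W = E * G - F\<^sup>2
      in ((G * p - F * q) / W, (E * q - F * p) / W))"

definition tang :: "field3 \<Rightarrow> field3 \<Rightarrow> field3" where
  "tang psi V s t = (let (a, b) = tcoef psi (V s t) s t
                     in a *\<^sub>R d_s psi s t + b *\<^sub>R d_t psi s t)"

definition dirD :: "field3 \<Rightarrow> field3 \<Rightarrow> field3 \<Rightarrow> field3" where
  "dirD psi X Y s t = (let (a, b) = tcoef psi (X s t) s t
                       in a *\<^sub>R d_s Y s t + b *\<^sub>R d_t Y s t)"

definition snm :: "(real^3 \<Rightarrow> real^3) \<Rightarrow> field3 \<Rightarrow> field3 \<Rightarrow> field3 \<Rightarrow> field3" where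
  "snm C psi X Y s t = dirD psi X Y s t + (C (psi s t) \<bullet> Y s t) *\<^sub>R X s t"

definition ind_conn :: "(real^3 \<Rightarrow> real^3) \<Rightarrow> field3 \<Rightarrow> field3 \<Rightarrow> field3 \<Rightarrow> field3" where
  "ind_conn C psi X Y = tang psi (snm C psi X Y)"

definition lie :: "field3 \<Rightarrow> field3 \<Rightarrow> field3 \<Rightarrow> field3" where
  "lie psi X Y s t = dirD psi X Y s t - dirD psi Y X s t"

definition ind_curv :: "(real^3 \<Rightarrow> real^3) \<Rightarrow> field3 \<Rightarrow> field3 \<Rightarrow> field3 \<Rightarrow> field3 \<Rightarrow> field3" where
  "ind_curv C psi X Y Z s t =
     ind_conn C psi X (ind_conn C psi Y Z) s t
     - ind_conn C psi Y (ind_conn C psi X Z) s t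
     - ind_conn C psi (lie psi X Y) Z s t"

text \<open>Sectional curvature computed with the orthonormal frame (e1,e2).\<close>
definition sect_curv :: "(real^3 \<Rightarrow> real^3) \<Rightarrow> field3 \<Rightarrow> field3 \<Rightarrow> field3 \<Rightarrow> real \<Rightarrow> real \<Rightarrow> real" where
  "sect_curv C psi e1 e2 s t =
     (ind_curv C psi e1 e2 e2 s t \<bullet> e1 s t + ind_curv C psi e2 e1 e1 s t \<bullet> e2 s t) / 2"

definition rot_surf :: "(real \<Rightarrow> real) \<Rightarrow> (real \<Rightarrow> real) \<Rightarrow> field3" where
  "rot_surf x z s t = vector [x s * cos t, x s * sin t, z s]"

definition C_z :: "real^3 \<Rightarrow> real^3" where
  "C_z p = vector [0, 0, 1]"

end

theory Submission
  imports Defs "HOL-Computational_Algebra.Polynomial"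
begin


lemma vec3_eq: "(vector [a,b,c] :: real^3) = vector [d,e,f] \<longleftrightarrow> a = d \<and> b = e \<and> c = f"
  by (auto simp: vec_eq_iff forall_3)
lemma vec3_inner[simp]: "(vector [a,b,c] :: real^3) \<bullet> vector [d,e,f] = a*d+b*e+c*f"
  by (simp add: inner_vec_def sum_3)
lemma vec3_scaleR[simp]: "k *\<^sub>R (vector [a,b,c] :: real^3) = vector [k*a,k*b,k*c]"
  by (auto simp: vec_eq_iff forall_3)
lemma vec3_add[simp]: "(vector [a,b,c] :: real^3) + vector [d,e,f] = vector [a+d,b+e,c+f]"
  by (auto simp: vec_eq_iff forall_3)
lemma vec3_diff[simp]: "(vector [a,b,c] :: real^3) - vector [d,e,f] = vector [a-d,b-e,c-f]"
  by (auto simp: vec_eq_iff forall_3)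
lemma vec3_zero: "(0 :: real^3) = vector [0,0,0]"
  by (auto simp: vec_eq_iff forall_3)
lemma Cz_inner[simp]: "C_z p \<bullet> (vector [a,b,c]) = c"
  by (simp add: C_z_def)


lemma sc_deriv: "(f has_real_derivative f') (at s) \<Longrightarrow> ((\<lambda>u. f u *\<^sub>R (v::'a::real_normed_vector)) has_vector_derivative f' *\<^sub>R v) (at s)"
  using has_vector_derivative_scaleR[OF _ has_vector_derivative_const, of f f' s UNIV v] by simp

lemma vec3_deriv:
  assumes "(f has_real_derivative f') (at s)" "(g has_real_derivative g') (at s)"
    "(h has_real_derivative h') (at s)"
  shows "((\<lambda>u. vector [f u, g u, h u] :: real^3) has_vector_derivative vector [f',g',h']) (at s)"
proof -
  have e: "\<And>a b c. (vector [a,b,c] :: real^3) = a *\<^sub>R vector[1,0,0] + b *\<^sub>R vector[0,1,0] + c *\<^sub>R vector[0,0,1]"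
    by simp
  have "((\<lambda>u. f u *\<^sub>R (vector[1,0,0]::real^3) + g u *\<^sub>R vector[0,1,0] + h u *\<^sub>R vector[0,0,1])
     has_vector_derivative (f' *\<^sub>R vector[1,0,0] + g' *\<^sub>R vector[0,1,0] + h' *\<^sub>R vector[0,0,1])) (at s)"
    by (intro has_vector_derivative_add sc_deriv assms)
  then show ?thesis unfolding e[symmetric] .
qed



lemma inner_e3: "(vector [0,0,1] :: real^3) \<bullet> v = v $ 3"
  by (simp add: inner_vec_def sum_3)
lemma Cz_inner_gen[simp]: "C_z p \<bullet> v = v $ 3"
  by (simp add: C_z_def inner_e3)

locale rs =
  fixes x z X1 X2 Z1 Z2 :: "real \<Rightarrow> real" and I :: "real set"
  assumes oI: "open I"
    and pos: "\<And>s. s\<in>I \<Longrightarrow> x s > 0"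
    and dx: "\<And>s. s\<in>I \<Longrightarrow> (x has_real_derivative X1 s) (at s)"
    and dX1: "\<And>s. s\<in>I \<Longrightarrow> (X1 has_real_derivative X2 s) (at s)"
    and dz: "\<And>s. s\<in>I \<Longrightarrow> (z has_real_derivative Z1 s) (at s)"
    and dZ1: "\<And>s. s\<in>I \<Longrightarrow> (Z1 has_real_derivative Z2 s) (at s)"
    and id1: "\<And>s. s\<in>I \<Longrightarrow> (X1 s)^2 + (Z1 s)^2 = 1"
    and id2: "\<And>s. s\<in>I \<Longrightarrow> X1 s * X2 s + Z1 s * Z2 s = 0"
begin

abbreviation "psi \<equiv> rot_surf x z"
definition "Ps s t = (vector [X1 s * cos t, X1 s * sin t, Z1 s] :: real^3)"
definition "Pss s t = (vector [X2 s * cos t, X2 s * sin t, Z2 s] :: real^3)"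
definition "Pt s t = (vector [- x s * sin t, x s * cos t, 0] :: real^3)"
definition "E2 t = (vector [- sin t, cos t, 0] :: real^3)"
abbreviation "e1 \<equiv> d_s psi"
abbreviation "e2 \<equiv> (\<lambda>s t. (1 / x s) *\<^sub>R d_t psi s t)"

lemma ds_loc:
  assumes "s \<in> I" "\<And>u. u \<in> I \<Longrightarrow> F u t = G u" "(G has_vector_derivative D) (at s)"
  shows "d_s F s t = D"
  unfolding d_s_def
  apply (rule vector_derivative_at)
  apply (rule has_vector_derivative_transform_within_open[OF assms(3) oI assms(1)])
  using assms(2) by simp

lemma dt_loc:
  assumes "\<And>u. F s u = G u" "(G has_vector_derivative D) (at t)"
  shows "d_t F s t = D"
  unfolding d_t_def
  apply (rule vector_derivative_at)
  using assms by (metis ext)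

lemma dPs: assumes "s \<in> I" shows " ((\<lambda>u. Ps u t) has_vector_derivative Pss s t) (at s)"
  unfolding Ps_def Pss_def
  by (rule vec3_deriv DERIV_cmult_right dX1 dZ1 assms)+

lemma Ps_eq: assumes "s \<in> I" shows " d_s psi s t = Ps s t"
  unfolding d_s_def rot_surf_def Ps_def
  by (rule vector_derivative_at vec3_deriv DERIV_cmult_right dx dz assms)+

lemma Pt_eq: "d_t psi s t = Pt s t"
proof -
  have "((\<lambda>u. vector [x s * cos u, x s * sin u, z s] :: real^3) has_vector_derivative
        vector [x s * - sin t, x s * cos t, 0]) (at t)"
    by (intro vec3_deriv DERIV_cmult DERIV_sin DERIV_cos DERIV_const)
  then show ?thesis unfolding d_t_def rot_surf_def Pt_def
    by (simp add: vector_derivative_at)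
qed

lemma trig1: "a* cos t*(a* cos t) + a* sin t*(a* sin t) = a*(a::real)"
proof -
  have "a* cos t*(a* cos t) + a* sin t*(a* sin t) = a*a*(cos t* cos t + sin t* sin t)"
    by (simp only: distrib_left mult_ac)
  also have "\<dots> = a*a" by simp
  finally show ?thesis .
qed

lemma trig3: "-a* sin t*(-a* sin t) + a* cos t*(a* cos t) + 0*0 = a*(a::real)"
proof -
  have "-a* sin t*(-a* sin t) + a* cos t*(a* cos t) + 0*0 = a*a*(cos t* cos t + sin t* sin t)"
    by (simp only: distrib_left mult_ac mult_minus_left mult_minus_right minus_minus mult_zero_left add_0_right add.commute)
  also have "\<dots> = a*a" by simp
  finally show ?thesis .
qed

lemma trig2: "a* cos t*(b* sin t) + a* sin t*(-b* cos t) = (0::real)"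
  by (simp add: algebra_simps)


lemma EFG:
  assumes "s \<in> I"
  shows "Ps s t \<bullet> Ps s t = 1" "Ps s t \<bullet> Pt s t = 0" "Pt s t \<bullet> Ps s t = 0"
    "Pt s t \<bullet> Pt s t = (x s)^2"
proof -
  have "Ps s t \<bullet> Ps s t = (X1 s)^2 + (Z1 s)^2"
    unfolding Ps_def vec3_inner trig1 power2_eq_square by simp
  then show "Ps s t \<bullet> Ps s t = 1" using id1[OF assms] by simp
  show "Ps s t \<bullet> Pt s t = 0" "Pt s t \<bullet> Ps s t = 0" by (simp_all add: Ps_def Pt_def algebra_simps)
  show "Pt s t \<bullet> Pt s t = (x s)^2"
    unfolding Pt_def vec3_inner power2_eq_square trig3 ..
qed


lemma tcoef_eq:
  assumes "s \<in> I"
  shows "tcoef psi V s t = (V \<bullet> Ps s t, (V \<bullet> Pt s t) / (x s)^2)"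
proof -
  have "x s > 0" using pos assms by auto
  then show ?thesis
    unfolding tcoef_def Let_def Ps_eq[OF assms] Pt_eq EFG[OF assms]
    by simp
qed

lemma tang_eq:
  assumes "s \<in> I"
  shows "tang psi F s t = (F s t \<bullet> Ps s t) *\<^sub>R Ps s t + ((F s t \<bullet> Pt s t) / (x s)^2) *\<^sub>R Pt s t"
  unfolding tang_def tcoef_eq[OF assms] Ps_eq[OF assms] Pt_eq by simp

lemma Pt_E2: "s \<in> I \<Longrightarrow> Pt s t = x s *\<^sub>R E2 t"
  by (simp add: Pt_def E2_def)

lemma E2_eq: "s \<in> I \<Longrightarrow> e2 s t = E2 t"
  using pos[of s] by (simp add: Pt_eq Pt_E2)

lemma ic_Ps:
  assumes "s \<in> I"
  shows "ind_conn C_z psi Xf Y s t \<bullet> Ps s t = snm C_z psi Xf Y s t \<bullet> Ps s t"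
  unfolding ind_conn_def tang_eq[OF assms] using EFG[OF assms]
  by (simp add: inner_add_left)

lemma ic_E2:
  assumes "s \<in> I"
  shows "ind_conn C_z psi Xf Y s t \<bullet> E2 t = snm C_z psi Xf Y s t \<bullet> E2 t"
proof -
  have xp: "x s > 0" using pos assms by auto
  have "ind_conn C_z psi Xf Y s t \<bullet> Pt s t = snm C_z psi Xf Y s t \<bullet> Pt s t"
    unfolding ind_conn_def tang_eq[OF assms] using EFG[OF assms] xp
    by (simp add: inner_add_left)
  then show ?thesis using xp unfolding Pt_E2[OF assms] by simp
qed

lemma tcoef_e1: "s \<in> I \<Longrightarrow> tcoef psi (e1 s t) s t = (1, 0)"
  by (simp add: tcoef_eq Ps_eq EFG)

lemma tcoef_e2: "s \<in> I \<Longrightarrow> tcoef psi (e2 s t) s t = (0, 1 / x s)"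
  using pos[of s] by (simp add: tcoef_eq Pt_eq EFG power2_eq_square)

lemma dirD_e1: "s \<in> I \<Longrightarrow> dirD psi e1 Y s t = d_s Y s t"
  by (simp add: dirD_def tcoef_e1)

lemma dirD_e2: "s \<in> I \<Longrightarrow> dirD psi e2 Y s t = (1 / x s) *\<^sub>R d_t Y s t"
  by (simp add: dirD_def tcoef_e2)

lemma dse2: "s \<in> I \<Longrightarrow> d_s e2 s t = 0"
  by (rule ds_loc[where G="\<lambda>u. E2 t"]) (auto simp: E2_eq)

lemma dte2: "s \<in> I \<Longrightarrow> d_t e2 s t = vector [- cos t, - sin t, 0]"
  apply (rule dt_loc[where G=E2])
   apply (simp add: E2_eq)
  unfolding E2_def
  using vec3_deriv[OF DERIV_minus[OF DERIV_sin] DERIV_cos DERIV_const] by simp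

lemma dte1:
  assumes "s \<in> I" shows "d_t e1 s t = X1 s *\<^sub>R E2 t"
proof -
  have "((\<lambda>u. vector[X1 s * cos u, X1 s * sin u, Z1 s] :: real^3) has_vector_derivative vector[X1 s * - sin t, X1 s * cos t, 0]) (at t)"
    by (intro vec3_deriv DERIV_cmult DERIV_sin DERIV_cos DERIV_const)
  then have D: "((\<lambda>u. Ps s u) has_vector_derivative X1 s *\<^sub>R E2 t) (at t)"
    by (simp add: Ps_def E2_def)
  show ?thesis
    using dt_loc[where G="Ps s", OF _ D] Ps_eq assms by simp
qed

lemma dse1: "s \<in> I \<Longrightarrow> d_s e1 s t = Pss s t"
  by (rule ds_loc[where G="\<lambda>u. Ps u t"]) (auto simp: Ps_eq dPs)


end

context rs begin

definition "f s = - X1 s / x s"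
definition "f' s = - X2 s / x s + (X1 s)^2 / (x s)^2"
definition "g s = X1 s / x s + Z1 s"
definition "g' s = X2 s / x s - (X1 s)^2 / (x s)^2 + Z2 s"

lemma df: assumes "s \<in> I" shows "(f has_real_derivative f' s) (at s)"
proof -
  have xp: "x s \<noteq> 0" using pos assms by force
  have "((\<lambda>u. - X1 u / x u) has_real_derivative - ((X2 s * x s - X1 s * X1 s) / (x s * x s))) (at s)"
    using DERIV_minus[OF DERIV_divide[OF dX1[OF assms] dx[OF assms] xp]] by simp
  moreover have "- ((X2 s * x s - X1 s * X1 s) / (x s * x s)) = f' s"
    using xp by (simp add: f'_def field_simps power2_eq_square)
  ultimately show ?thesis unfolding f_def[abs_def] by simp
qed

lemma dg: assumes "s \<in> I" shows "(g has_real_derivative g' s) (at s)"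
proof -
  have xp: "x s \<noteq> 0" using pos assms by force
  have "((\<lambda>u. X1 u / x u + Z1 u) has_real_derivative ((X2 s * x s - X1 s * X1 s) / (x s * x s)) + Z2 s) (at s)"
    using DERIV_add[OF DERIV_divide[OF dX1[OF assms] dx[OF assms] xp] dZ1[OF assms]] by simp
  moreover have "((X2 s * x s - X1 s * X1 s) / (x s * x s)) + Z2 s = g' s"
    using xp by (simp add: g'_def field_simps power2_eq_square)
  ultimately show ?thesis unfolding g_def[abs_def] by simp
qed

lemma trigK[simp]: "cos t * (cos t * a) + sin t * (sin t * a) = (a::real)"
proof -
  have "cos t * (cos t * a) + sin t * (sin t * a) = ((cos t)^2 + (sin t)^2) * a"
    by (simp only: power2_eq_square distrib_right mult.assoc)
  then show ?thesis by simp
qed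

lemma trigKd[simp]: "cos t * (cos t * a) / b + sin t * (sin t * a) / b = a / (b::real)"
  by (simp only: add_divide_distrib[symmetric] trigK)

lemma cs: "cos (t::real) * cos t + sin t * sin t = 1" using trigK[of t 1] by simp

lemma N22: assumes "s \<in> I" shows "ind_conn C_z psi e2 e2 s t = f s *\<^sub>R Ps s t"
proof -
  have xp: "x s \<noteq> 0" using pos assms by force
  have V: "snm C_z psi e2 e2 s t = vector [- cos t / x s, - sin t / x s, 0]"
    using assms by (simp add: snm_def dirD_e2 dte2 E2_eq E2_def)
  have a: "vector [- cos t / x s, - sin t / x s, 0] \<bullet> Ps s t = f s"
  proof -
    have "vector [- cos t / x s, - sin t / x s, 0] \<bullet> Ps s t = - (X1 s / x s) * (cos t * cos t + sin t * sin t)"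
      by (simp add: Ps_def algebra_simps)
    then show ?thesis by (simp add: cs f_def)
  qed
  have b: "vector [- cos t / x s, - sin t / x s, 0] \<bullet> Pt s t = 0"
    by (simp add: Pt_def algebra_simps)
  show ?thesis unfolding ind_conn_def tang_eq[OF assms] V a b by simp
qed

lemma N12: assumes "s \<in> I" shows "ind_conn C_z psi e1 e2 s t = 0"
proof -
  have V: "snm C_z psi e1 e2 s t = 0"
    using assms by (simp add: snm_def dirD_e1 dse2 E2_eq E2_def)
  show ?thesis unfolding ind_conn_def tang_eq[OF assms] V by simp
qed

lemma N11: assumes "s \<in> I" shows "ind_conn C_z psi e1 e1 s t = Z1 s *\<^sub>R Ps s t"
proof -
  have V: "snm C_z psi e1 e1 s t = Pss s t + Z1 s *\<^sub>R Ps s t"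
    using assms by (simp add: snm_def dirD_e1 dse1 Ps_eq Ps_def)
  have a: "(Pss s t + Z1 s *\<^sub>R Ps s t) \<bullet> Ps s t = Z1 s"
  proof -
    have "(Pss s t + Z1 s *\<^sub>R Ps s t) \<bullet> Ps s t = (X1 s * X2 s) * (cos t * cos t + sin t * sin t) + Z2 s * Z1 s
       + Z1 s * (Ps s t \<bullet> Ps s t)"
      by (simp add: Ps_def Pss_def algebra_simps inner_add_left del: vec3_inner) (simp add: algebra_simps)
    then show ?thesis using EFG[OF assms] id2[OF assms] by (simp add: cs algebra_simps)
  qed
  have b: "(Pss s t + Z1 s *\<^sub>R Ps s t) \<bullet> Pt s t = 0"
    using EFG[OF assms] by (simp add: inner_add_left Pss_def Pt_def algebra_simps)
  show ?thesis unfolding ind_conn_def tang_eq[OF assms] V a b by simp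
qed

lemma N21: assumes "s \<in> I" shows "ind_conn C_z psi e2 e1 s t = g s *\<^sub>R E2 t"
proof -
  have xp: "x s > 0" using pos assms by force
  have V: "snm C_z psi e2 e1 s t = g s *\<^sub>R E2 t"
    using assms by (simp add: snm_def dirD_e2 dte1 E2_eq Ps_eq g_def Ps_def algebra_simps)
  have a: "(g s *\<^sub>R E2 t) \<bullet> Ps s t = 0"
    by (simp add: E2_def Ps_def algebra_simps)
  have b: "(g s *\<^sub>R E2 t) \<bullet> Pt s t = g s * x s"
  proof -
    have "(g s *\<^sub>R E2 t) \<bullet> Pt s t = g s * x s * (cos t * cos t + sin t * sin t)"
      by (simp add: E2_def Pt_def algebra_simps)
    then show ?thesis by (simp add: cs)
  qed
  show ?thesis unfolding ind_conn_def tang_eq[OF assms] V a b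
    using xp Pt_E2[OF assms] by (simp add: power2_eq_square)
qed

end

context rs begin

lemma PssPs: assumes "s \<in> I" shows "Pss s t \<bullet> Ps s t = 0"
proof -
  have "Pss s t \<bullet> Ps s t = X1 s * X2 s + Z1 s * Z2 s"
    by (simp add: Pss_def Ps_def algebra_simps)
  then show ?thesis using id2[OF assms] by simp
qed

lemma E2E2[simp]: "E2 t \<bullet> E2 t = 1"
  using cs[of t] by (simp add: E2_def add.commute)
lemma E2Ps: "E2 t \<bullet> Ps s t = 0"
  by (simp add: E2_def Ps_def algebra_simps)
lemma E2_3[simp]: "E2 t $ 3 = 0" by (simp add: E2_def)
lemma Ps_3[simp]: "Ps s t $ 3 = Z1 s" by (simp add: Ps_def)

lemma dPs_t: "((\<lambda>u. Ps s u) has_vector_derivative X1 s *\<^sub>R E2 t) (at t)"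
proof -
  have "((\<lambda>u. vector[X1 s * cos u, X1 s * sin u, Z1 s] :: real^3) has_vector_derivative vector[X1 s * - sin t, X1 s * cos t, 0]) (at t)"
    by (intro vec3_deriv DERIV_cmult DERIV_sin DERIV_cos DERIV_const)
  then show ?thesis by (simp add: Ps_def E2_def)
qed

lemma I1: assumes "s \<in> I"
  shows "ind_conn C_z psi e1 (ind_conn C_z psi e2 e2) s t \<bullet> Ps s t = f' s + f s * Z1 s"
proof -
  have D: "d_s (ind_conn C_z psi e2 e2) s t = f s *\<^sub>R Pss s t + f' s *\<^sub>R Ps s t"
    by (rule ds_loc[OF assms, where G="\<lambda>u. f u *\<^sub>R Ps u t"])
       (auto simp: N22 intro: has_vector_derivative_scaleR[OF df[OF assms] dPs[OF assms], simplified])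
  have "snm C_z psi e1 (ind_conn C_z psi e2 e2) s t = f s *\<^sub>R Pss s t + f' s *\<^sub>R Ps s t + (f s * Z1 s) *\<^sub>R Ps s t"
    using assms by (simp add: snm_def dirD_e1 D N22 Ps_eq)
  then show ?thesis
    unfolding ic_Ps[OF assms]
    using PssPs[OF assms] EFG[OF assms] by (simp add: inner_add_left)
qed

lemma I2: assumes "s \<in> I"
  shows "ind_conn C_z psi e2 (ind_conn C_z psi e1 e2) s t \<bullet> Ps s t = 0"
proof -
  have D: "d_t (ind_conn C_z psi e1 e2) s t = 0"
    by (rule dt_loc[where G="\<lambda>u. 0"]) (auto simp: N12 assms)
  have "snm C_z psi e2 (ind_conn C_z psi e1 e2) s t = 0"
    using assms by (simp add: snm_def dirD_e2 D N12)
  then show ?thesis unfolding ic_Ps[OF assms] by simp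
qed

lemma lie12: assumes "s \<in> I" shows "lie psi e1 e2 s t = (- X1 s / x s) *\<^sub>R E2 t"
  using assms by (simp add: lie_def dirD_e1 dirD_e2 dse2 dte1)

lemma lie21: assumes "s \<in> I" shows "lie psi e2 e1 s t = (X1 s / x s) *\<^sub>R E2 t"
  using assms by (simp add: lie_def dirD_e1 dirD_e2 dse2 dte1)

lemma I3: assumes "s \<in> I"
  shows "ind_conn C_z psi (lie psi e1 e2) e2 s t \<bullet> Ps s t = (X1 s)^2 / (x s)^2"
proof -
  have xp: "x s > 0" using pos assms by force
  have tc: "tcoef psi (lie psi e1 e2 s t) s t = (0, - X1 s / (x s)^2)"
    using xp unfolding tcoef_eq[OF assms] lie12[OF assms] Pt_E2[OF assms]
    by (simp add: E2Ps power2_eq_square)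
  have S: "snm C_z psi (lie psi e1 e2) e2 s t = (- X1 s / (x s)^2) *\<^sub>R vector [- cos t, - sin t, 0]"
    using assms by (simp add: snm_def dirD_def tc dte2 E2_eq del: vec3_scaleR)
  have W: "vector [- cos t, - sin t, 0] \<bullet> Ps s t = - X1 s"
    by (simp add: Ps_def algebra_simps)
  show ?thesis unfolding ic_Ps[OF assms] S inner_scaleR_left W
    by (simp add: power2_eq_square)
qed

lemma J1: assumes "s \<in> I"
  shows "ind_conn C_z psi e2 (ind_conn C_z psi e1 e1) s t \<bullet> E2 t = Z1 s * X1 s / x s + (Z1 s)^2"
proof -
  have D: "d_t (ind_conn C_z psi e1 e1) s t = (Z1 s * X1 s) *\<^sub>R E2 t"
    by (rule dt_loc[where G="\<lambda>u. Z1 s *\<^sub>R Ps s u"])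
       (auto simp: N11 assms intro: has_vector_derivative_scaleR[OF DERIV_const dPs_t, simplified])
  have "snm C_z psi e2 (ind_conn C_z psi e1 e1) s t = (Z1 s * X1 s / x s) *\<^sub>R E2 t + (Z1 s * Z1 s) *\<^sub>R E2 t"
    using assms by (simp add: snm_def dirD_e2 D N11 E2_eq)
  then show ?thesis unfolding ic_E2[OF assms]
    by (simp add: inner_add_left power2_eq_square)
qed

lemma J2: assumes "s \<in> I"
  shows "ind_conn C_z psi e1 (ind_conn C_z psi e2 e1) s t \<bullet> E2 t = g' s"
proof -
  have D: "d_s (ind_conn C_z psi e2 e1) s t = g' s *\<^sub>R E2 t"
    by (rule ds_loc[OF assms, where G="\<lambda>u. g u *\<^sub>R E2 t"])
       (auto simp: N21 intro: sc_deriv dg[OF assms])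
  have "snm C_z psi e1 (ind_conn C_z psi e2 e1) s t = g' s *\<^sub>R E2 t"
    using assms by (simp add: snm_def dirD_e1 D N21)
  then show ?thesis unfolding ic_E2[OF assms] by simp
qed

lemma J3: assumes "s \<in> I"
  shows "ind_conn C_z psi (lie psi e2 e1) e1 s t \<bullet> E2 t = (X1 s)^2 / (x s)^2 + Z1 s * X1 s / x s"
proof -
  have xp: "x s > 0" using pos assms by force
  have tc: "tcoef psi ((X1 s / x s) *\<^sub>R E2 t) s t = (0, X1 s / (x s)^2)"
    using xp unfolding tcoef_eq[OF assms] Pt_E2[OF assms]
    by (simp add: E2Ps power2_eq_square)
  have "snm C_z psi (lie psi e2 e1) e1 s t = (X1 s / (x s)^2 * X1 s) *\<^sub>R E2 t + (Z1 s * X1 s / x s) *\<^sub>R E2 t"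
    using assms by (simp add: snm_def dirD_def tc dte1 lie21 Ps_eq)
  then show ?thesis unfolding ic_E2[OF assms]
    by (simp add: inner_add_left power2_eq_square)
qed

lemma K_eq: assumes "s \<in> I"
  shows "sect_curv C_z psi e1 e2 s t =
    (- 2 * X2 s / x s - X1 s * Z1 s / x s - Z2 s + (Z1 s)^2) / 2"
proof -
  have xp: "x s > 0" using pos assms by force
  have "sect_curv C_z psi e1 e2 s t =
     ((f' s + f s * Z1 s) - 0 - (X1 s)^2 / (x s)^2
      + ((Z1 s * X1 s / x s + (Z1 s)^2) - g' s - ((X1 s)^2 / (x s)^2 + Z1 s * X1 s / x s))) / 2"
    unfolding sect_curv_def ind_curv_def inner_diff_left
    unfolding Ps_eq[OF assms] E2_eq[OF assms] I1[OF assms] I2[OF assms] I3[OF assms]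
      J1[OF assms] J2[OF assms] J3[OF assms] ..
  also have "\<dots> = (- 2 * X2 s / x s - X1 s * Z1 s / x s - Z2 s + (Z1 s)^2) / 2"
    using xp by (simp add: f_def f'_def g'_def field_simps)
  finally show ?thesis .
qed

end


lemma cos_not_loc_const:
  fixes a h :: real
  assumes "0 < h" "h < pi" "cos (a + h) = cos a" "cos (a - h) = cos a"
  shows False
proof -
  have sh: "sin h > 0" using assms sin_gt_zero by auto
  have e1: "cos a * cos h - sin a * sin h = cos a" using assms(3) by (simp add: cos_add)
  have e2: "cos a * cos h + sin a * sin h = cos a" using assms(4) by (simp add: cos_diff)
  have "sin a * sin h = 0" using e1 e2 by linarith
  then have sa: "sin a = 0" using sh by simp
  then have "(cos a)^2 = 1" using sin_cos_squared_add[of a] by simp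
  then have ca: "cos a \<noteq> 0" by auto
  have "cos a * cos h = cos a * 1" using e1 sa by simp
  then have "cos h = 1" using ca by simp
  then have "(sin h)^2 = 0" using sin_cos_squared_add[of h] by simp
  then show False using sh by simp
qed

definition pA :: "real \<Rightarrow> real \<Rightarrow> real \<Rightarrow> real poly" where
  "pA r c1 k = [: - 2*r*k*c1, 2 - 2*r^2*k, r*c1, r^2 :]"
definition pB :: "real \<Rightarrow> real \<Rightarrow> real poly" where
  "pB r c1 = [: c1, 2*r :]"
definition pP :: "real \<Rightarrow> real \<Rightarrow> real \<Rightarrow> real poly" where
  "pP r c1 k = pA r c1 k * pA r c1 k - [:1, 0, -1:] * pB r c1 * pB r c1"

lemma poly_pP: "poly (pP r c1 k) u = (poly (pA r c1 k) u)^2 - (1 - u^2) * (poly (pB r c1) u)^2"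
  by (simp add: pP_def power2_eq_square algebra_simps)

lemma pP_nz: assumes "r > 0" shows "pP r c1 k \<noteq> 0"
proof
  assume h: "pP r c1 k = 0"
  have pos: "poly (pP r c1 k) u > 0" if "u^2 > 1" "poly (pB r c1) u \<noteq> 0" for u
  proof -
    have "(u^2 - 1) * (poly (pB r c1) u)^2 > 0" using that by simp
    moreover have "(poly (pA r c1 k) u)^2 \<ge> 0" by simp
    moreover have "poly (pP r c1 k) u = (poly (pA r c1 k) u)^2 + (u^2 - 1) * (poly (pB r c1) u)^2"
      by (simp add: poly_pP algebra_simps)
    ultimately show ?thesis by linarith
  qed
  have "poly (pB r c1) 2 \<noteq> 0 \<or> poly (pB r c1) 3 \<noteq> 0"
    using assms by (auto simp: pB_def)
  then show False
    using pos[of 2] pos[of 3] h by auto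
qed



theorem theorem4p4:
  fixes x z :: "real \<Rightarrow> real" and I :: "real set" and c1 c2 r :: real
  assumes "open I" and "is_interval I" and "I \<noteq> {}"
    and "\<forall>s\<in>I. x s > 0"
    and "\<forall>s\<in>I. (deriv x s)\<^sup>2 + (deriv z s)\<^sup>2 = 1"
    and "r > 0"
    and "\<forall>s\<in>I. x s = c1 + r * cos (s / r) \<and> z s = c2 + r * sin (s / r)"
  shows "\<not> (\<exists>k. \<forall>s\<in>I. \<forall>t. sect_curv C_z (rot_surf x z)
            (d_s (rot_surf x z))
            (\<lambda>s t. (1 / x s) *\<^sub>R d_t (rot_surf x z) s t) s t = k)"
proof
  assume "\<exists>k. \<forall>s\<in>I. \<forall>t. sect_curv C_z (rot_surf x z)
            (d_s (rot_surf x z))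
            (\<lambda>s t. (1 / x s) *\<^sub>R d_t (rot_surf x z) s t) s t = k"
  then obtain k where hk: "\<And>s t. s \<in> I \<Longrightarrow> sect_curv C_z (rot_surf x z)
            (d_s (rot_surf x z))
            (\<lambda>s t. (1 / x s) *\<^sub>R d_t (rot_surf x z) s t) s t = k" by blast
  have r0: "r \<noteq> 0" using assms(6) by simp
  define X1 where "X1 s = - sin (s / r)" for s
  define X2 where "X2 s = - cos (s / r) / r" for s
  define Z1 where "Z1 s = cos (s / r)" for s
  define Z2 where "Z2 s = - sin (s / r) / r" for s
  have dX: "((\<lambda>u. c1 + r * cos (u / r)) has_real_derivative X1 s) (at s)" for s
    unfolding X1_def using r0 by (auto intro!: derivative_eq_intros simp: field_simps)
  have dZ: "((\<lambda>u. c2 + r * sin (u / r)) has_real_derivative Z1 s) (at s)" for s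
    unfolding Z1_def using r0 by (auto intro!: derivative_eq_intros simp: field_simps)
  have dX1: "(X1 has_real_derivative X2 s) (at s)" for s
    unfolding X1_def[abs_def] X2_def using r0 by (auto intro!: derivative_eq_intros simp: field_simps)
  have dZ1: "(Z1 has_real_derivative Z2 s) (at s)" for s
    unfolding Z1_def[abs_def] Z2_def using r0 by (auto intro!: derivative_eq_intros simp: field_simps)
  interpret rs x z X1 X2 Z1 Z2 I
  proof
    show "open I" by fact
    show "\<And>s. s \<in> I \<Longrightarrow> 0 < x s" using assms(4) by auto
    show "\<And>s. s \<in> I \<Longrightarrow> (x has_real_derivative X1 s) (at s)"
      using has_field_derivative_transform_within_open[OF dX assms(1)] assms(7) by auto
    show "\<And>s. s \<in> I \<Longrightarrow> (z has_real_derivative Z1 s) (at s)"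
      using has_field_derivative_transform_within_open[OF dZ assms(1)] assms(7) by auto
    show "\<And>s. s \<in> I \<Longrightarrow> (X1 has_real_derivative X2 s) (at s)" using dX1 by auto
    show "\<And>s. s \<in> I \<Longrightarrow> (Z1 has_real_derivative Z2 s) (at s)" using dZ1 by auto
    show "\<And>s. s \<in> I \<Longrightarrow> (X1 s)\<^sup>2 + (Z1 s)\<^sup>2 = 1" by (simp add: X1_def Z1_def)
    show "\<And>s. s \<in> I \<Longrightarrow> X1 s * X2 s + Z1 s * Z2 s = 0" by (simp add: X1_def Z1_def X2_def Z2_def)
  qed
  have key: "poly (pP r c1 k) (cos (s / r)) = 0" if sI: "s \<in> I" for s
  proof -
    define u where "u = cos (s / r)"
    define v where "v = sin (s / r)"
    have xs: "x s = c1 + r * u" using assms(7) sI u_def by auto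
    have xp: "c1 + r * u > 0" using assms(4) sI xs by auto
    have uv: "u^2 + v^2 = 1" by (simp add: u_def v_def)
    have xsp: "x s > 0" using xs xp by simp
    have h0: "(- 2 * X2 s / x s - X1 s * Z1 s / x s - Z2 s + (Z1 s)^2) / 2 = k"
      using hk[OF sI, of 0] K_eq[OF sI, of 0] by simp
    have h1: "- 2 * X2 s - X1 s * Z1 s - Z2 s * x s + (Z1 s)^2 * x s = 2 * k * x s"
    proof -
      have "(- 2 * X2 s / x s - X1 s * Z1 s / x s - Z2 s + (Z1 s)^2) * x s = 2 * k * x s"
        using h0 by simp
      then show ?thesis using xsp by (simp add: algebra_simps diff_divide_distrib add_divide_distrib)
    qed
    have h2: "r * (- 2 * X2 s - X1 s * Z1 s - Z2 s * x s + (Z1 s)^2 * x s) = r * (2 * k * x s)"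
      using h1 by simp
    have "r * (- 2 * X2 s - X1 s * Z1 s - Z2 s * x s + (Z1 s)^2 * x s)
        = 2 * u + r * v * u + v * x s + r * u^2 * x s"
      using r0 by (simp add: X1_def X2_def Z1_def Z2_def u_def v_def algebra_simps)
    then have "2 * u + r * v * u + v * x s + r * u^2 * x s = 2 * r * k * x s"
      using h2 by (simp add: algebra_simps)
    then have "2 * u + r * v * u + (c1 + r * u) * v + r * (c1 + r * u) * u^2 = 2 * r * k * (c1 + r * u)"
      unfolding xs by (simp add: algebra_simps)
    then have e: "poly (pA r c1 k) u = - v * poly (pB r c1) u"
      by (simp add: pA_def pB_def algebra_simps power2_eq_square power3_eq_cube)
    have "(poly (pA r c1 k) u)^2 = v^2 * (poly (pB r c1) u)^2"
      unfolding e by (simp add: power_mult_distrib)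
    also have "\<dots> = (1 - u^2) * (poly (pB r c1) u)^2"
    proof -
      have v2: "v^2 = 1 - u^2" using uv by linarith
      show ?thesis unfolding v2 ..
    qed
    finally show ?thesis unfolding poly_pP u_def by simp
  qed
  obtain s0 where s0: "s0 \<in> I" using assms(3) by blast
  obtain e where e: "e > 0" "ball s0 e \<subseteq> I" using assms(1) s0 open_contains_ball by blast
  define T where "T = (\<lambda>s. cos (s / r)) ` ball s0 e"
  have "T \<subseteq> {u. poly (pP r c1 k) u = 0}" using key e(2) unfolding T_def by auto
  then have fT: "finite T" using poly_roots_finite[OF pP_nz[OF assms(6)]] finite_subset by blast
  have cT: "connected T" unfolding T_def
    by (intro connected_continuous_image continuous_intros) (auto simp: r0)
  have "T \<noteq> {}" using e(1) unfolding T_def by auto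
  then obtain a where Ta: "T = {a}" using fT cT connected_finite_iff_sing by blast
  define h where "h = min (e / (2 * r)) 1"
  have h0: "0 < h" using e(1) assms(6) by (simp add: h_def)
  have hpi: "h < pi" using pi_gt3 by (simp add: h_def)
  have "r * h \<le> e / 2" using assms(6) unfolding h_def
    by (simp add: min_def field_simps)
  then have in1: "s0 + r * h \<in> ball s0 e" and in2: "s0 - r * h \<in> ball s0 e"
    using e(1) h0 assms(6) by (auto simp: dist_real_def)
  have ca: "cos (s / r) = a" if "s \<in> ball s0 e" for s
  proof -
    have "cos (s / r) \<in> T" unfolding T_def using that by simp
    then show ?thesis using Ta by simp
  qed
  have "cos ((s0 + r * h) / r) = a" "cos ((s0 - r * h) / r) = a" "cos (s0 / r) = a"
    using ca[OF in1] ca[OF in2] ca[of s0] e(1) by auto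
  moreover have "(s0 + r * h) / r = s0 / r + h" "(s0 - r * h) / r = s0 / r - h"
    using r0 by (simp_all add: field_simps)
  ultimately show False using cos_not_loc_const[OF h0 hpi, of "s0 / r"] by simp
qed

end
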